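(* Let $(V,\Omega)$ be a complex symplectic vector space of dimension $2n$ with Weyl algebra $\mathscr W$, let $H\subset USp(V,\Omega)$ be a connected compact Lie group with Lie algebra $\mathfrak h$, let $\mathbf m\in i\mathfrak h$ act invertibly on $V$, and let $\boldsymbol\zeta\colon\mathfrak h\to\mathbb R$ be a Lie algebra character (extended complex-linearly). Let $\hat\mu_{\boldsymbol\zeta}=\hat\mu(\mathbf m)+\boldsymbol\zeta(\mathbf m)\in\mathscr W$, $g=\exp(2\pi\mathbf m)\in H_{\mathbb C}$, $V^{\pm}$ the sums of eigenspaces of $\mathbf m$ on $V$ with positive/negative eigenvalues, and $\mathbb V=\mathscr W/\mathscr W V^+$. Then the functional $$\operatorname{Tr}_{\mathbf m}(w)=\operatorname{Tr}\big(\mathbb V;(-1)^F\exp(2\pi\hat\mu_{\boldsymbol\zeta})\,w\big),\qquad w\in\mathscr W,$$ is well defined (the defining series converges for every $w$), it is a twisted trace on $\mathscr W$ for the automorphism $(-1)^Fg^{-1}$, i.e. $\operatorname{Tr}_{\mathbf m}(w_1w_2)=\operatorname{Tr}_{\mathbf m}\big(((-1)^Fg^{-1}\cdot w_2)\,w_1\big)$ for all $w_1,w_2\in\mathscr W$, and every linear functional $\mathscr W\to\mathbb C$ that is a twisted trace for this automorphism is a scalar multiple of $\operatorname{Tr}_{\mathbf m}$.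
   Context: The Weyl algebra $\mathscr W$ is the $\mathbb C$-algebra generated by $V$ modulo $uv-vu=\Omega(u,v)$. $USp(V,\Omega)=Sp(V,\Omega)\cap U(V)$ for a hermitian inner product compatible with $\Omega$; $H$ (hence $H_{\mathbb C}$) acts on $\mathscr W$ by algebra automorphisms extending its action on $V$. For $X\in\mathfrak h_{\mathbb C}$, $\hat\mu(X)=\tfrac12 m((1\otimes\kappa^{-1})(X_V))$ where $\Omega(u,v)=\langle u,\kappa(v)\rangle$, $X_V\in V\otimes V^*$ is the action of $X$ and $m\colon V\otimes V\to\mathscr W$ is multiplication; concretely, in a Darboux basis ($[x_i,y_j]=\delta_{ij}$, $[x_i,x_j]=[y_i,y_j]=0$) with $Xx_i=-a_ix_i$, $Xy_i=a_iy_i$, $\hat\mu(X)=\sum_i a_i(y_ix_i+\tfrac12)$. The eigenvalues of $\mathbf m$ on $V$ are real and nonzero and $V^\pm$ are Lagrangian. $(-1)^F$ is the automorphism of $\mathscr W$ induced by $v\mapsto -v$ on $V$; it preserves $\mathscr WV^+$ and so induces a linear endomorphism of $\mathbb V$. Choosing a Darboux basis of $\mathbf m$-eigenvectors with $x_i\in V^-$, $y_i\in V^+$, the module $\mathbb V$ has basis $x_1^{u_1}\cdots x_n^{u_n}\cdot[1]$, $u\in\mathbb Z_{\ge0}^n$, on which $\hat\mu_{\boldsymbol\zeta}$ acts diagonally; $\operatorname{Tr}(\mathbb V;A)$ denotes the sum of the diagonal matrix coefficients of $A$ in this basis. A twisted trace for an automorphism $\omega$ of an algebra $\mathscr A$ is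 a linear map $\operatorname{Tr}_\omega\colon\mathscr A\to\mathbb C$ with $\operatorname{Tr}_\omega(XY)=\operatorname{Tr}_\omega(\omega(Y)X)$. *)

theory Defs
  imports "HOL-Analysis.Analysis"
begin

text \<open>A Darboux basis x_i (in V^-), y_i (in V^+), indexed by a finite
type 'n, with m x_i = -a_i x_i and m y_i = a_i y_i, a_i > 0. The Fock module
V = W / W V^+ has basis x^u [1]; an element of V is recorded by its coefficient function
on multi-indices u :: 'n => nat. The Weyl algebra is realised (faithfully) as the algebra
of operators on V generated by the actions of x_i and y_i.\<close>

type_synonym 'n fock = "('n \<Rightarrow> nat) \<Rightarrow> complex"
type_synonym 'n wop = "'n fock \<Rightarrow> 'n fock"

definition Xop :: "'n \<Rightarrow> 'n wop" where
  "Xop i f = (\<lambda>u. if u i = 0 then 0 else f (u(i := u i - 1)))"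

text \<open>Action of y_i on V; since [x_i, y_i] = 1 and y_i [1] = 0, y_i acts as minus d/dx_i.\<close>
definition Yop :: "'n \<Rightarrow> 'n wop" where
  "Yop i f = (\<lambda>u. - of_nat (u i + 1) * f (u(i := u i + 1)))"

inductive_set weyl :: "'n wop set" where
  one: "id \<in> weyl"
| genX: "Xop i \<in> weyl"
| genY: "Yop i \<in> weyl"
| add: "w \<in> weyl \<Longrightarrow> w' \<in> weyl \<Longrightarrow> (\<lambda>f u. w f u + w' f u) \<in> weyl"
| smult: "w \<in> weyl \<Longrightarrow> (\<lambda>f u. c * w f u) \<in> weyl"
| mult: "w \<in> weyl \<Longrightarrow> w' \<in> weyl \<Longrightarrow> w \<circ> w' \<in> weyl"

definition basisv :: "('n \<Rightarrow> nat) \<Rightarrow> 'n fock" where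
  "basisv u = (\<lambda>v. if v = u then 1 else 0)"

text \<open>hat mu_zeta = sum_i a_i (y_i x_i + 1/2) + zeta(m), acting on V.\<close>
definition muhat :: "('n::finite \<Rightarrow> real) \<Rightarrow> complex \<Rightarrow> 'n wop" where
  "muhat a c f = (\<lambda>u. (\<Sum>i\<in>UNIV. complex_of_real (a i) * (Yop i (Xop i f) u + f u / 2)) + c * f u)"

text \<open>exp(2 pi A) for an operator A acting diagonally on the basis x^u [1].\<close>
definition diag_exp2pi :: "'n wop \<Rightarrow> 'n wop" where
  "diag_exp2pi A f = (\<lambda>u. exp (2 * complex_of_real pi * A (basisv u) u) * f u)"

definition parityV :: "'n::finite wop" where
  "parityV f = (\<lambda>u. (-1) ^ (\<Sum>i\<in>UNIV. u i) * f u)"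

definition trV :: "'n wop \<Rightarrow> complex" where
  "trV A = infsum (\<lambda>u. A (basisv u) u) UNIV"

definition trV_converges :: "'n wop \<Rightarrow> bool" where
  "trV_converges A \<longleftrightarrow> (\<lambda>u. A (basisv u) u) summable_on UNIV"

definition Tr_m :: "('n::finite \<Rightarrow> real) \<Rightarrow> complex \<Rightarrow> 'n wop \<Rightarrow> complex" where
  "Tr_m a c w = trV (parityV \<circ> diag_exp2pi (muhat a c) \<circ> w)"

text \<open>The automorphism (-1)^F g^{-1}, g = exp(2 pi m): on generators x_i maps to
-exp(2 pi a_i) x_i and y_i maps to -exp(-2 pi a_i) y_i. On the Weyl algebra it is implemented
by conjugation with the induced diagonal operator D on V (D x^u[1] = prod_i d_i^(u_i) x^u[1]).\<close>
definition twD :: "('n::finite \<Rightarrow> real) \<Rightarrow> 'n wop" where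
  "twD a f = (\<lambda>u. (\<Prod>i\<in>UNIV. (- complex_of_real (exp (2 * pi * a i))) ^ u i) * f u)"

definition twDinv :: "('n::finite \<Rightarrow> real) \<Rightarrow> 'n wop" where
  "twDinv a f = (\<lambda>u. (\<Prod>i\<in>UNIV. (- complex_of_real (exp (- 2 * pi * a i))) ^ u i) * f u)"

definition twist_aut :: "('n::finite \<Rightarrow> real) \<Rightarrow> 'n wop \<Rightarrow> 'n wop" where
  "twist_aut a w = twD a \<circ> w \<circ> twDinv a"

definition weyl_linear :: "('n wop \<Rightarrow> complex) \<Rightarrow> bool" where
  "weyl_linear T \<longleftrightarrow>
     (\<forall>w\<in>weyl. \<forall>w'\<in>weyl. T (\<lambda>f u. w f u + w' f u) = T w + T w') \<and>
     (\<forall>w\<in>weyl. \<forall>c. T (\<lambda>f u. c * w f u) = c * T w)"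

definition twisted_trace :: "('n wop \<Rightarrow> 'n wop) \<Rightarrow> ('n wop \<Rightarrow> complex) \<Rightarrow> bool" where
  "twisted_trace \<omega> T \<longleftrightarrow> weyl_linear T \<and>
     (\<forall>w1\<in>weyl. \<forall>w2\<in>weyl. T (w1 \<circ> w2) = T (\<omega> w2 \<circ> w1))"

end

theory Submission
  imports Defs
begin

lemma weyl_lin:
  assumes "w \<in> weyl"
  shows "w (\<lambda>u. f u + g u) = (\<lambda>u. w f u + w g u) \<and> w (\<lambda>u. k * f u) = (\<lambda>u. k * w f u)"
  using assms
proof (induction arbitrary: f g k)
  case one then show ?case by simp
next
  case (genX i) then show ?case by (auto simp: Xop_def fun_eq_iff)
next
  case (genY i) then show ?case by (auto simp: Yop_def fun_eq_iff algebra_simps)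
next
  case (add w w') then show ?case by (auto simp: fun_eq_iff algebra_simps)
next
  case (smult w c) then show ?case by (auto simp: fun_eq_iff algebra_simps)
next
  case (mult w w')
  have a: "w' (\<lambda>u. f u + g u) = (\<lambda>u. w' f u + w' g u)" "w' (\<lambda>u. k * f u) = (\<lambda>u. k * w' f u)"
    using mult.IH(2) by blast+
  show ?case using mult.IH(1) by (simp add: a)
qed

lemma weyl_add_op: "w \<in> weyl \<Longrightarrow> w (\<lambda>u. f u + g u) = (\<lambda>u. w f u + w g u)"
  using weyl_lin by blast
lemma weyl_smult_op: "w \<in> weyl \<Longrightarrow> w (\<lambda>u. k * f u) = (\<lambda>u. k * w f u)"
  using weyl_lin by blast
lemma weyl_zero_op: "w \<in> weyl \<Longrightarrow> w (\<lambda>u. 0) = (\<lambda>u. 0)"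
  using weyl_smult_op[of w 0 "\<lambda>u. 0"] by simp

lemma prod_upd:
  fixes g :: "'n::finite \<Rightarrow> nat \<Rightarrow> 'a::comm_monoid_mult"
  shows "(\<Prod>j\<in>UNIV. g j ((u(i:=x)) j)) = g i x * (\<Prod>j\<in>UNIV-{i}. g j (u j))"
proof -
  have "(\<Prod>j\<in>UNIV. g j ((u(i:=x)) j)) = g i ((u(i:=x)) i) * (\<Prod>j\<in>UNIV-{i}. g j ((u(i:=x)) j))"
    by (rule prod.remove) auto
  also have "(\<Prod>j\<in>UNIV-{i}. g j ((u(i:=x)) j)) = (\<Prod>j\<in>UNIV-{i}. g j (u j))"
    by (rule prod.cong) auto
  finally show ?thesis by simp
qed

lemma prod_split:
  fixes g :: "'n::finite \<Rightarrow> nat \<Rightarrow> 'a::comm_monoid_mult"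
  shows "(\<Prod>j\<in>UNIV. g j (u j)) = g i (u i) * (\<Prod>j\<in>UNIV-{i}. g j (u j))"
  by (rule prod.remove) auto

lemma sum_upd:
  fixes g :: "'n::finite \<Rightarrow> nat \<Rightarrow> 'a::ab_group_add"
  shows "(\<Sum>j\<in>UNIV. g j ((u(i:=x)) j)) = (\<Sum>j\<in>UNIV. g j (u j)) - g i (u i) + g i x"
proof -
  have "(\<Sum>j\<in>UNIV. g j ((u(i:=x)) j)) = g i ((u(i:=x)) i) + (\<Sum>j\<in>UNIV-{i}. g j ((u(i:=x)) j))"
    by (rule sum.remove) auto
  also have "(\<Sum>j\<in>UNIV-{i}. g j ((u(i:=x)) j)) = (\<Sum>j\<in>UNIV-{i}. g j (u j))"
    by (rule sum.cong) auto
  also have "(\<Sum>j\<in>UNIV. g j (u j)) = g i (u i) + (\<Sum>j\<in>UNIV-{i}. g j (u j))"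
    by (rule sum.remove) auto
  ultimately show ?thesis by (simp add: algebra_simps)
qed

lemma nsum_upd:
  fixes u :: "'n::finite \<Rightarrow> nat"
  shows "sum (u(i:=x)) UNIV + u i = sum u UNIV + x"
proof -
  have "sum (u(i:=x)) UNIV = (u(i:=x)) i + sum (u(i:=x)) (UNIV-{i})"
    by (rule sum.remove) auto
  also have "sum (u(i:=x)) (UNIV-{i}) = sum u (UNIV-{i})"
    by (rule sum.cong) auto
  also have "sum u UNIV = u i + sum u (UNIV-{i})"
    by (rule sum.remove) auto
  ultimately show ?thesis by simp
qed

lemma nsum_ge: fixes u :: "'n::finite \<Rightarrow> nat" shows "u i \<le> sum u UNIV"
  by (rule member_le_sum) auto

definition Pp :: "('n::finite \<Rightarrow> real) \<Rightarrow> ('n \<Rightarrow> nat) \<Rightarrow> complex" where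
  "Pp a u = (\<Prod>i\<in>UNIV. (- complex_of_real (exp (2 * pi * a i))) ^ u i)"
definition Pm :: "('n::finite \<Rightarrow> real) \<Rightarrow> ('n \<Rightarrow> nat) \<Rightarrow> complex" where
  "Pm a u = (\<Prod>i\<in>UNIV. (- complex_of_real (exp (- 2 * pi * a i))) ^ u i)"

lemma twD_apply: "twD a f u = Pp a u * f u" by (simp add: twD_def Pp_def)
lemma twDinv_apply: "twDinv a f u = Pm a u * f u" by (simp add: twDinv_def Pm_def)

lemma Pp_Pm: "Pp a u * Pm a u = 1"
proof -
  have "Pp a u * Pm a u = (\<Prod>i\<in>UNIV. ((- complex_of_real (exp (2 * pi * a i))) * (- complex_of_real (exp (- 2 * pi * a i)))) ^ u i)"
    unfolding Pp_def Pm_def prod.distrib[symmetric] by (rule prod.cong) (simp_all only: power_mult_distrib)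
  also have "\<dots> = 1"
    by (rule prod.neutral) (simp flip: of_real_mult exp_add)
  finally show ?thesis .
qed

lemma Pp_upd: "Pp a (u(i := Suc (u i))) = (- complex_of_real (exp (2 * pi * a i))) * Pp a u"
  unfolding Pp_def
  by (subst prod_upd[where g = "\<lambda>j k. (- complex_of_real (exp (2 * pi * a j))) ^ k"],
      subst prod_split[where i = i], simp)

lemma Pm_upd: "Pm a (u(i := Suc (u i))) = (- complex_of_real (exp (- 2 * pi * a i))) * Pm a u"
  unfolding Pm_def
  by (subst prod_upd[where g = "\<lambda>j k. (- complex_of_real (exp (- 2 * pi * a j))) ^ k"],
      subst prod_split[where i = i], simp)

lemma twDinv_twD: "twDinv a (twD a f) = f"
  by (simp add: twD_apply twDinv_apply fun_eq_iff mult.assoc[symmetric] mult.commute[of "Pm a _"] Pp_Pm)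
lemma twD_twDinv: "twD a (twDinv a f) = f"
  by (simp add: twD_apply twDinv_apply fun_eq_iff mult.assoc[symmetric] Pp_Pm)

lemma tw_id: "twist_aut a id = id"
  by (simp add: twist_aut_def fun_eq_iff twD_twDinv)

lemma tw_comp: "twist_aut a (A \<circ> B) = twist_aut a A \<circ> twist_aut a B"
  by (simp add: twist_aut_def fun_eq_iff twDinv_twD)

lemma tw_add: "twist_aut a (\<lambda>f u. A f u + B f u) = (\<lambda>f u. twist_aut a A f u + twist_aut a B f u)"
  by (simp add: twist_aut_def fun_eq_iff twD_apply algebra_simps)

lemma tw_smult: "twist_aut a (\<lambda>f u. k * A f u) = (\<lambda>f u. k * twist_aut a A f u)"
  by (simp add: twist_aut_def fun_eq_iff twD_apply algebra_simps)

lemma tw_diag: assumes "\<And>f v. A f v = \<phi> v * f v" shows "twist_aut a A = A"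
proof (intro ext)
  fix f v
  have "twist_aut a A f v = Pp a v * (\<phi> v * (Pm a v * f v))"
    using assms by (simp add: twist_aut_def twD_apply twDinv_apply)
  also have "\<dots> = (Pp a v * Pm a v) * \<phi> v * f v" by (simp only: ac_simps)
  finally show "twist_aut a A f v = A f v" using assms by (simp add: Pp_Pm)
qed

lemma tw_X: "twist_aut a (Xop i) = (\<lambda>f v. (- complex_of_real (exp (2 * pi * a i))) * Xop i f v)"
proof (intro ext)
  fix f v
  show "twist_aut a (Xop i) f v = (- complex_of_real (exp (2 * pi * a i))) * Xop i f v"
  proof (cases "v i = 0")
    case True then show ?thesis by (simp add: twist_aut_def twD_apply Xop_def)
  next
    case False
    define u where "u = v(i := v i - 1)"
    have v: "v = u(i := Suc (u i))" using False by (auto simp: u_def fun_eq_iff)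
    have x: "Xop i f v = f u" using False by (simp add: Xop_def u_def)
    have "twist_aut a (Xop i) f v = Pp a v * (Pm a u * f u)"
      using False by (simp add: twist_aut_def twD_apply twDinv_apply Xop_def u_def)
    also have "Pp a v = (- complex_of_real (exp (2 * pi * a i))) * Pp a u"
      by (subst v, rule Pp_upd)
    also have "(- complex_of_real (exp (2 * pi * a i))) * Pp a u * (Pm a u * f u)
       = (- complex_of_real (exp (2 * pi * a i))) * (Pp a u * Pm a u) * f u" by (simp only: ac_simps)
    also have "\<dots> = (- complex_of_real (exp (2 * pi * a i))) * Xop i f v" by (simp only: Pp_Pm x) simp
    finally show ?thesis .
  qed
qed

lemma tw_Y: "twist_aut a (Yop i) = (\<lambda>f v. (- complex_of_real (exp (- 2 * pi * a i))) * Yop i f v)"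
proof (intro ext)
  fix f v
  have "twist_aut a (Yop i) f v = Pp a v * (- of_nat (v i + 1) * (Pm a (v(i := Suc (v i))) * f (v(i := v i + 1))))"
    by (simp add: twist_aut_def twD_apply twDinv_apply Yop_def)
  also have "Pm a (v(i := Suc (v i))) = (- complex_of_real (exp (- 2 * pi * a i))) * Pm a v"
    by (rule Pm_upd)
  also have "Pp a v * (- of_nat (v i + 1) * ((- complex_of_real (exp (- 2 * pi * a i))) * Pm a v * f (v(i := v i + 1))))
     = (- complex_of_real (exp (- 2 * pi * a i))) * (Pp a v * Pm a v) * (- of_nat (v i + 1) * f (v(i := v i + 1)))"
    by (simp only: ac_simps)
  also have "\<dots> = (- complex_of_real (exp (- 2 * pi * a i))) * Yop i f v"
    by (simp only: Pp_Pm) (simp add: Yop_def)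
  finally show "twist_aut a (Yop i) f v = (- complex_of_real (exp (- 2 * pi * a i))) * Yop i f v" .
qed

lemma tw_weyl: "w \<in> weyl \<Longrightarrow> twist_aut a w \<in> weyl"
proof (induction rule: weyl.induct)
  case one then show ?case by (metis tw_id weyl.one)
next
  case (genX i) then show ?case unfolding tw_X by (rule weyl.smult[OF weyl.genX])
next
  case (genY i) then show ?case unfolding tw_Y by (rule weyl.smult[OF weyl.genY])
next
  case (add w w') then show ?case by (simp add: tw_add weyl.add)
next
  case (smult w c) then show ?case by (simp add: tw_smult weyl.smult)
next
  case (mult w w') then show ?case by (metis tw_comp weyl.mult)
qed

definition Phi :: "('n::finite \<Rightarrow> real) \<Rightarrow> complex \<Rightarrow> ('n \<Rightarrow> nat) \<Rightarrow> complex" where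
  "Phi a c u = (-1) ^ (sum u UNIV) * exp (2 * complex_of_real pi * muhat a c (basisv u) u)"

lemma trm_entry: "(parityV \<circ> diag_exp2pi (muhat a c) \<circ> w) (basisv u) u = Phi a c u * w (basisv u) u"
  by (simp add: parityV_def diag_exp2pi_def Phi_def)

lemma Tr_m_eq: "Tr_m a c w = infsum (\<lambda>u. Phi a c u * w (basisv u) u) UNIV"
  unfolding Tr_m_def trV_def trm_entry by (rule refl)

lemma conv_eq: "trV_converges (parityV \<circ> diag_exp2pi (muhat a c) \<circ> w) \<longleftrightarrow>
    (\<lambda>u. Phi a c u * w (basisv u) u) summable_on UNIV"
  unfolding trV_converges_def trm_entry by (rule refl)

lemma muhat_val: "muhat a c (basisv u) u = (\<Sum>j\<in>UNIV. complex_of_real (a j) * (- of_nat (u j + 1) + 1/2)) + c"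
  by (simp add: muhat_def Yop_def Xop_def basisv_def)

lemma exp_shift: "exp (2 * complex_of_real pi * (S - complex_of_real x)) = complex_of_real (exp (- 2 * pi * x)) * exp (2 * complex_of_real pi * S)"
proof -
  have "2 * complex_of_real pi * (S - complex_of_real x) = complex_of_real (- 2 * pi * x) + 2 * complex_of_real pi * S"
    by (simp add: algebra_simps)
  then show ?thesis by (simp only: exp_add exp_of_real)
qed

lemma Phi_upd: "Phi a c (u(i := Suc (u i))) = (- complex_of_real (exp (- 2 * pi * a i))) * Phi a c u"
proof -
  define S where "S = muhat a c (basisv u) u"
  have m: "muhat a c (basisv (u(i := Suc (u i)))) (u(i := Suc (u i))) = S - complex_of_real (a i)"
    unfolding S_def muhat_val
    by (subst sum_upd[where g = "\<lambda>j k. complex_of_real (a j) * (- of_nat (k + 1) + 1/2)"]) (simp add: algebra_simps)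
  have s: "sum (u(i := Suc (u i))) UNIV = Suc (sum u UNIV)"
    using nsum_upd[of u i "Suc (u i)"] by simp
  show ?thesis unfolding Phi_def m s exp_shift S_def[symmetric] by simp
qed

definition good :: "'n::finite wop \<Rightarrow> bool" where
 "good w \<longleftrightarrow> (\<exists>C K R. C \<ge> 0 \<and> (\<forall>N B f. (\<forall>u. sum u UNIV \<le> N + R \<longrightarrow> norm (f u) \<le> B) \<longrightarrow>
     (\<forall>v. sum v UNIV \<le> N \<longrightarrow> norm (w f v) \<le> C * B * (1 + real N) ^ K)))"

lemma B_nonneg: fixes N R :: nat and f :: "('n::finite \<Rightarrow> nat) \<Rightarrow> 'b::real_normed_vector" assumes "\<forall>u. sum u UNIV \<le> N + R \<longrightarrow> norm (f u) \<le> (B::real)" shows "0 \<le> B"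
proof -
  have "norm (f (\<lambda>_. 0)) \<le> B" using assms[rule_format, of "\<lambda>_. 0"] by simp
  then show ?thesis using norm_ge_zero order_trans by blast
qed

lemma good_id: "good id"
  unfolding good_def by (rule exI[of _ 1], rule exI[of _ 0], rule exI[of _ 0]) auto

lemma good_X: "good (Xop (i::'n::finite))"
  unfolding good_def
proof (rule exI[of _ 1], rule exI[of _ 0], rule exI[of _ 0], intro conjI allI impI)
  fix N :: nat and B :: real and f :: "'n fock" and v :: "'n \<Rightarrow> nat"
  assume h: "\<forall>u. sum u UNIV \<le> N + 0 \<longrightarrow> norm (f u) \<le> (B::real)" and v: "sum v UNIV \<le> N"
  have B: "0 \<le> B" using B_nonneg[OF h] .
  show "norm (Xop i f v) \<le> 1 * B * (1 + real N) ^ 0"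
  proof (cases "v i = 0")
    case True then show ?thesis using B by (simp add: Xop_def)
  next
    case False
    have "sum (v(i := v i - 1)) UNIV \<le> N" using nsum_upd[of v i "v i - 1"] v False by simp
    then show ?thesis using h False by (simp add: Xop_def)
  qed
qed simp

lemma good_Y: "good (Yop (i::'n::finite))"
  unfolding good_def
proof (rule exI[of _ 1], rule exI[of _ 1], rule exI[of _ 1], intro conjI allI impI)
  fix N :: nat and B :: real and f :: "'n fock" and v :: "'n \<Rightarrow> nat"
  assume h: "\<forall>u. sum u UNIV \<le> N + 1 \<longrightarrow> norm (f u) \<le> (B::real)" and v: "sum v UNIV \<le> N"
  have B: "0 \<le> B" using B_nonneg[OF h] .
  have "sum (v(i := v i + 1)) UNIV \<le> N + 1" using nsum_upd[of v i "v i + 1"] v by simp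
  then have f: "norm (f (v(i := v i + 1))) \<le> B" using h by blast
  have vi: "real (v i + 1) \<le> 1 + real N" using nsum_ge[of v i] v by simp
  have "norm (Yop i f v) = norm (- (of_nat (v i + 1) :: complex) * f (v(i := v i + 1)))"
    by (simp only: Yop_def)
  also have "\<dots> = real (v i + 1) * norm (f (v(i := v i + 1)))"
    by (simp only: norm_mult norm_minus_cancel norm_of_nat)
  also have "\<dots> \<le> (1 + real N) * B"
    by (rule mult_mono[OF vi f]) auto
  finally show "norm (Yop i f v) \<le> 1 * B * (1 + real N) ^ 1" by (simp add: algebra_simps)
qed simp

lemma good_add: fixes w :: "'n::finite wop" assumes "good w" "good w'" shows "good (\<lambda>f u. w f u + w' f u)"
proof -
  obtain C1 K1 R1 where c1: "C1 \<ge> 0" and h1: "\<And>N B f. (\<forall>u. sum u UNIV \<le> N + R1 \<longrightarrow> norm (f u) \<le> B) \<Longrightarrow>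
     (\<forall>v. sum v UNIV \<le> N \<longrightarrow> norm (w f v) \<le> C1 * B * (1 + real N) ^ K1)"
    using assms(1) unfolding good_def by blast
  obtain C2 K2 R2 where c2: "C2 \<ge> 0" and h2: "\<And>N B f. (\<forall>u. sum u UNIV \<le> N + R2 \<longrightarrow> norm (f u) \<le> B) \<Longrightarrow>
     (\<forall>v. sum v UNIV \<le> N \<longrightarrow> norm (w' f v) \<le> C2 * B * (1 + real N) ^ K2)"
    using assms(2) unfolding good_def by blast
  show ?thesis unfolding good_def
  proof (rule exI[of _ "C1 + C2"], rule exI[of _ "max K1 K2"], rule exI[of _ "max R1 R2"], intro conjI allI impI)
    show "0 \<le> C1 + C2" using c1 c2 by simp
    fix N :: nat and B :: real and f :: "'n fock" and v :: "'n \<Rightarrow> nat"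
    assume h: "\<forall>u. sum u UNIV \<le> N + max R1 R2 \<longrightarrow> norm (f u) \<le> (B::real)" and v: "sum v UNIV \<le> N"
    have B: "0 \<le> B" using B_nonneg[OF h] .
    have a1: "norm (w f v) \<le> C1 * B * (1 + real N) ^ K1" using h1[of N f B] h v by auto
    have a2: "norm (w' f v) \<le> C2 * B * (1 + real N) ^ K2" using h2[of N f B] h v by auto
    have p1: "(1 + real N) ^ K1 \<le> (1 + real N) ^ max K1 K2" by (rule power_increasing) auto
    have p2: "(1 + real N) ^ K2 \<le> (1 + real N) ^ max K1 K2" by (rule power_increasing) auto
    have "norm (w f v + w' f v) \<le> norm (w f v) + norm (w' f v)" by (rule norm_triangle_ineq)
    also have "\<dots> \<le> C1 * B * (1 + real N) ^ max K1 K2 + C2 * B * (1 + real N) ^ max K1 K2"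
      using a1 a2 p1 p2 c1 c2 B
      by (meson add_mono mult_left_mono order_trans mult_nonneg_nonneg)
    finally show "norm (w f v + w' f v) \<le> (C1 + C2) * B * (1 + real N) ^ max K1 K2"
      by (simp add: algebra_simps)
  qed
qed

lemma good_smult: fixes w :: "'n::finite wop" assumes "good w" shows "good (\<lambda>f u. k * w f u)"
proof -
  obtain C1 K1 R1 where c1: "C1 \<ge> 0" and h1: "\<And>N B f. (\<forall>u. sum u UNIV \<le> N + R1 \<longrightarrow> norm (f u) \<le> B) \<Longrightarrow>
     (\<forall>v. sum v UNIV \<le> N \<longrightarrow> norm (w f v) \<le> C1 * B * (1 + real N) ^ K1)"
    using assms(1) unfolding good_def by blast
  show ?thesis unfolding good_def
  proof (rule exI[of _ "norm k * C1"], rule exI[of _ "K1"], rule exI[of _ "R1"], intro conjI allI impI)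
    show "0 \<le> norm k * C1" using c1 by simp
    fix N :: nat and B :: real and f :: "'n fock" and v :: "'n \<Rightarrow> nat"
    assume h: "\<forall>u. sum u UNIV \<le> N + R1 \<longrightarrow> norm (f u) \<le> (B::real)" and v: "sum v UNIV \<le> N"
    have a1: "norm (w f v) \<le> C1 * B * (1 + real N) ^ K1" using h1[of N f B] h v by auto
    show "norm (k * w f v) \<le> norm k * C1 * B * (1 + real N) ^ K1"
      using mult_left_mono[OF a1, of "norm k"] by (simp add: norm_mult algebra_simps)
  qed
qed

lemma good_mult: fixes w :: "'n::finite wop" assumes "good w" "good w'" shows "good (w \<circ> w')"
proof -
  obtain C1 K1 R1 where c1: "C1 \<ge> 0" and h1: "\<And>N B f. (\<forall>u. sum u UNIV \<le> N + R1 \<longrightarrow> norm (f u) \<le> B) \<Longrightarrow>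
     (\<forall>v. sum v UNIV \<le> N \<longrightarrow> norm (w f v) \<le> C1 * B * (1 + real N) ^ K1)"
    using assms(1) unfolding good_def by blast
  obtain C2 K2 R2 where c2: "C2 \<ge> 0" and h2: "\<And>N B f. (\<forall>u. sum u UNIV \<le> N + R2 \<longrightarrow> norm (f u) \<le> B) \<Longrightarrow>
     (\<forall>v. sum v UNIV \<le> N \<longrightarrow> norm (w' f v) \<le> C2 * B * (1 + real N) ^ K2)"
    using assms(2) unfolding good_def by blast
  show ?thesis unfolding good_def
  proof (rule exI[of _ "C1 * C2 * (1 + real R1) ^ K2"], rule exI[of _ "K1 + K2"], rule exI[of _ "R1 + R2"], intro conjI allI impI)
    show "0 \<le> C1 * C2 * (1 + real R1) ^ K2" using c1 c2 by simp
    fix N :: nat and B :: real and f :: "'n fock" and v :: "'n \<Rightarrow> nat"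
    assume h: "\<forall>u. sum u UNIV \<le> N + (R1 + R2) \<longrightarrow> norm (f u) \<le> (B::real)" and v: "sum v UNIV \<le> N"
    have B: "0 \<le> B" using B_nonneg[OF h] .
    have a2: "\<forall>u. sum u UNIV \<le> N + R1 \<longrightarrow> norm (w' f u) \<le> C2 * B * (1 + real (N + R1)) ^ K2"
      using h2[of "N + R1" f B] h by (simp add: add.assoc)
    have a1: "norm (w (w' f) v) \<le> C1 * (C2 * B * (1 + real (N + R1)) ^ K2) * (1 + real N) ^ K1"
      using h1[OF a2] v by blast
    have "1 + real (N + R1) \<le> (1 + real R1) * (1 + real N)" by (simp add: algebra_simps)
    then have p: "(1 + real (N + R1)) ^ K2 \<le> ((1 + real R1) * (1 + real N)) ^ K2"
      by (rule power_mono) simp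
    have "C1 * (C2 * B * (1 + real (N + R1)) ^ K2) * (1 + real N) ^ K1
        \<le> C1 * (C2 * B * ((1 + real R1) * (1 + real N)) ^ K2) * (1 + real N) ^ K1"
      using p c1 c2 B by (intro mult_right_mono mult_left_mono) auto
    also have "\<dots> = C1 * C2 * (1 + real R1) ^ K2 * B * (1 + real N) ^ (K1 + K2)"
      by (simp only: power_mult_distrib power_add mult_ac)
    finally show "norm ((w \<circ> w') f v) \<le> C1 * C2 * (1 + real R1) ^ K2 * B * (1 + real N) ^ (K1 + K2)"
      using a1 by simp
  qed
qed

lemma good_weyl: fixes w :: "'n::finite wop" shows "w \<in> weyl \<Longrightarrow> good w"
proof (induction rule: weyl.induct)
  case one show ?case by (rule good_id)
next
  case (genX i) show ?case by (rule good_X)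
next
  case (genY i) show ?case by (rule good_Y)
next
  case (add w w') then show ?case using good_add by blast
next
  case (smult w c) then show ?case using good_smult by blast
next
  case (mult w w') then show ?case using good_mult by blast
qed

lemma entry_bound: fixes w :: "'n::finite wop" assumes "w \<in> weyl"
  shows "\<exists>C K. C \<ge> 0 \<and> (\<forall>u. norm (w (basisv u) u) \<le> C * (1 + real (sum u UNIV)) ^ K)"
proof -
  obtain C K R where c: "C \<ge> 0" and h: "\<And>N B f. (\<forall>u. sum u UNIV \<le> N + R \<longrightarrow> norm (f u) \<le> B) \<Longrightarrow>
     (\<forall>v. sum v UNIV \<le> N \<longrightarrow> norm (w f v) \<le> C * B * (1 + real N) ^ K)"
    using good_weyl[OF assms] unfolding good_def by blast
  have "norm (w (basisv u) u) \<le> C * (1 + real (sum u UNIV)) ^ K" for u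
    using h[of "sum u UNIV" "basisv u" 1] by (simp add: basisv_def)
  then show ?thesis using c by blast
qed

lemma poly_geom_summable:
  fixes q :: real assumes q0: "0 \<le> q" and q1: "q < 1"
  shows "summable (\<lambda>k. (1 + real k) ^ K * q ^ k)"
proof (cases "q = 0")
  case True
  show ?thesis
    by (rule summable_ratio_test[of "1/2" 0]) (auto simp: True)
next
  case False
  then have qp: "q > 0" using q0 by simp
  have lim: "(\<lambda>n. (1 + inverse (real (Suc n))) ^ K) \<longlonglongrightarrow> (1 + 0) ^ K"
    by (intro tendsto_intros LIMSEQ_inverse_real_of_nat)
  have "1 < (1 + q) / (2 * q)" using qp q1 by (simp add: field_simps)
  then have "eventually (\<lambda>n. (1 + inverse (real (Suc n))) ^ K < (1 + q) / (2 * q)) sequentially"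
    using lim by (intro order_tendstoD(2)) auto
  then obtain N where N: "\<And>n. n \<ge> N \<Longrightarrow> (1 + inverse (real (Suc n))) ^ K < (1 + q) / (2 * q)"
    by (auto simp: eventually_sequentially)
  show ?thesis
  proof (rule summable_ratio_test[of "(1 + q) / 2" N])
    show "(1 + q) / 2 < 1" using q1 by simp
    fix n assume n: "N \<le> n"
    have e: "1 + real (Suc n) = (1 + inverse (real (Suc n))) * (1 + real n)"
      by (simp add: field_simps)
    have nn: "(1 + real (Suc n)) ^ K * q ^ Suc n \<ge> 0" using q0 by simp
    have "norm ((1 + real (Suc n)) ^ K * q ^ Suc n) = (1 + real (Suc n)) ^ K * q ^ Suc n"
      using nn by simp
    also have "\<dots> = (1 + inverse (real (Suc n))) ^ K * q * ((1 + real n) ^ K * q ^ n)"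
      by (simp only: e power_mult_distrib power_Suc mult_ac)
    also have "\<dots> \<le> (1 + q) / (2 * q) * q * ((1 + real n) ^ K * q ^ n)"
      using N[OF n] q0 by (intro mult_right_mono) auto
    also have "\<dots> = (1 + q) / 2 * norm ((1 + real n) ^ K * q ^ n)"
      using qp by (simp add: abs_mult)
    finally show "norm ((1 + real (Suc n)) ^ K * q ^ Suc n) \<le> (1 + q) / 2 * norm ((1 + real n) ^ K * q ^ n)" .
  qed
qed

lemma one_plus_sum_le_prod:
  fixes x :: "'a \<Rightarrow> real"
  assumes "finite A" "\<And>j. j \<in> A \<Longrightarrow> x j \<ge> 0"
  shows "1 + sum x A \<le> (\<Prod>j\<in>A. 1 + x j)"
  using assms
proof (induction A rule: finite_induct)
  case empty then show ?case by simp
next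
  case (insert y F)
  have IH: "1 + sum x F \<le> (\<Prod>j\<in>F. 1 + x j)" using insert by auto
  have xy: "x y \<ge> 0" using insert by auto
  have sF: "sum x F \<ge> 0" using insert by (auto intro: sum_nonneg)
  have "1 + sum x (insert y F) = 1 + x y + sum x F" using insert by simp
  also have "\<dots> \<le> (1 + x y) * (1 + sum x F)" using xy sF by (simp add: algebra_simps)
  also have "\<dots> \<le> (1 + x y) * (\<Prod>j\<in>F. 1 + x j)" using IH xy by (intro mult_left_mono) auto
  finally show ?case using insert by simp
qed

lemma Phi_norm:
  fixes a :: "'n::finite \<Rightarrow> real"
  assumes "\<And>j. a j \<ge> 0"
  shows "norm (Phi a c u) \<le> exp (2 * pi * Re c) * (\<Prod>j\<in>UNIV. exp (- 2 * pi * a j) ^ u j)"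
proof -
  have re: "Re (muhat a c (basisv u) u) = (\<Sum>j\<in>UNIV. a j * (- real (u j + 1) + 1/2)) + Re c"
    unfolding muhat_val by (simp add: Re_sum)
  have le: "(\<Sum>j\<in>UNIV. a j * (- real (u j + 1) + 1/2)) \<le> (\<Sum>j\<in>UNIV. - (a j * real (u j)))"
    using assms by (intro sum_mono) (simp add: algebra_simps)
  have "norm (Phi a c u) = exp (2 * pi * Re (muhat a c (basisv u) u))"
    by (simp add: Phi_def norm_mult norm_power)
  also have "\<dots> \<le> exp (2 * pi * ((\<Sum>j\<in>UNIV. - (a j * real (u j))) + Re c))"
    unfolding re using le by simp
  also have "\<dots> = exp (2 * pi * Re c) * (\<Prod>j\<in>UNIV. exp (- 2 * pi * a j) ^ u j)"
  proof -
    have "2 * pi * ((\<Sum>j\<in>UNIV. - (a j * real (u j))) + Re c) = 2 * pi * Re c + (\<Sum>j\<in>UNIV. real (u j) * (- 2 * pi * a j))"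
      by (simp add: sum_distrib_left algebra_simps sum_negf)
    moreover have "exp (real (u j) * (- 2 * pi * a j)) = exp (- 2 * pi * a j) ^ u j" for j
      by (rule exp_of_nat_mult)
    ultimately show ?thesis by (simp only: exp_add exp_sum[of UNIV] finite_class.finite_UNIV simp_thms)
  qed
  finally show ?thesis .
qed

lemma trace_summable:
  fixes a :: "'n::finite \<Rightarrow> real" and w :: "'n wop"
  assumes apos: "\<And>j. a j > 0" and w: "w \<in> weyl"
  shows "(\<lambda>u. Phi a c u * w (basisv u) u) summable_on UNIV"
proof -
  obtain C K where C: "C \<ge> 0" and b: "\<And>u. norm (w (basisv u) u) \<le> C * (1 + real (sum u UNIV)) ^ K"
    using entry_bound[OF w] by blast
  define g where "g j k = (1 + real k) ^ K * exp (- 2 * pi * a j) ^ k" for j k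
  have g0: "g j k \<ge> 0" for j k by (simp add: g_def)
  have g1: "Infinite_Set_Sum.abs_summable_on (g j) UNIV" for j
  proof -
    have "summable (\<lambda>k. norm (norm (g j k)))"
      using poly_geom_summable[of "exp (- 2 * pi * a j)" K] apos[of j] by (simp add: g_def)
    then have "(\<lambda>k. norm (g j k)) summable_on UNIV"
      by (rule norm_summable_imp_summable_on)
    then show ?thesis using abs_summable_equivalent by blast
  qed
  have "Infinite_Set_Sum.abs_summable_on (\<lambda>u. \<Prod>j\<in>UNIV. g j (u j)) (PiE UNIV (\<lambda>_. UNIV))"
    by (rule abs_summable_on_prod_PiE) (auto intro: g1)
  then have P: "(\<lambda>u. norm (\<Prod>j\<in>UNIV. g j (u j))) summable_on UNIV"
    using abs_summable_equivalent by (metis PiE_UNIV)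
  then have P2: "(\<lambda>u. norm (exp (2 * pi * Re c) * C * (\<Prod>j\<in>UNIV. g j (u j)))) summable_on UNIV"
  proof -
    have "(\<lambda>u. (exp (2 * pi * Re c) * C) * norm (\<Prod>j\<in>UNIV. g j (u j))) summable_on UNIV"
      using P by (rule summable_on_cmult_right)
    then show ?thesis using C by (simp add: abs_mult)
  qed
  have bound: "norm (Phi a c u * w (basisv u) u) \<le> norm (exp (2 * pi * Re c) * C * (\<Prod>j\<in>UNIV. g j (u j)))" for u
  proof -
    have pb: "(1 + real (sum u UNIV)) ^ K \<le> (\<Prod>j\<in>UNIV. (1 + real (u j)) ^ K)"
    proof -
      have "1 + real (sum u UNIV) \<le> (\<Prod>j\<in>UNIV. 1 + real (u j))"
        using one_plus_sum_le_prod[of UNIV "\<lambda>j. real (u j)"] by simp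
      then have "(1 + real (sum u UNIV)) ^ K \<le> (\<Prod>j\<in>UNIV. 1 + real (u j)) ^ K"
        by (rule power_mono) (simp add: sum_nonneg)
      then show ?thesis by (simp add: prod_power_distrib)
    qed
    have "norm (Phi a c u * w (basisv u) u) = norm (Phi a c u) * norm (w (basisv u) u)" by (rule norm_mult)
    also have "\<dots> \<le> (exp (2 * pi * Re c) * (\<Prod>j\<in>UNIV. exp (- 2 * pi * a j) ^ u j)) * (C * (\<Prod>j\<in>UNIV. (1 + real (u j)) ^ K))"
    proof (rule mult_mono)
      show "norm (Phi a c u) \<le> exp (2 * pi * Re c) * (\<Prod>j\<in>UNIV. exp (- 2 * pi * a j) ^ u j)"
        using Phi_norm[of a c u] apos less_imp_le by blast
      show "norm (w (basisv u) u) \<le> C * (\<Prod>j\<in>UNIV. (1 + real (u j)) ^ K)"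
        using b[of u] pb C by (meson mult_left_mono order_trans)
      show "0 \<le> exp (2 * pi * Re c) * (\<Prod>j\<in>UNIV. exp (- 2 * pi * a j) ^ u j)"
        by (simp add: prod_nonneg)
    qed simp
    also have "\<dots> = exp (2 * pi * Re c) * C * (\<Prod>j\<in>UNIV. g j (u j))"
      by (simp add: g_def prod.distrib mult_ac)
    also have "\<dots> = norm (exp (2 * pi * Re c) * C * (\<Prod>j\<in>UNIV. g j (u j)))"
      using C g0 by (simp add: abs_mult prod_nonneg)
    finally show ?thesis .
  qed
  have "(\<lambda>u. norm (Phi a c u * w (basisv u) u)) summable_on UNIV"
    by (rule Infinite_Sum.abs_summable_on_comparison_test[OF P2 bound])
  then show ?thesis by (rule abs_summable_summable)
qed

lemma Tr_add:
  fixes a :: "'n::finite \<Rightarrow> real" and w w' :: "'n wop"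
  assumes apos: "\<And>j. a j > 0" and "w \<in> weyl" "w' \<in> weyl"
  shows "Tr_m a c (\<lambda>f u. w f u + w' f u) = Tr_m a c w + Tr_m a c w'"
proof -
  have "Tr_m a c (\<lambda>f u. w f u + w' f u) = infsum (\<lambda>u. Phi a c u * w (basisv u) u + Phi a c u * w' (basisv u) u) UNIV"
    unfolding Tr_m_eq by (simp add: algebra_simps)
  also have "\<dots> = Tr_m a c w + Tr_m a c w'"
    unfolding Tr_m_eq by (rule infsum_add; rule trace_summable[OF apos]) (use assms in auto)
  finally show ?thesis .
qed

lemma Tr_smult: "Tr_m a c (\<lambda>f u. k * w f u) = k * Tr_m a c w"
proof -
  have "Tr_m a c (\<lambda>f u. k * w f u) = infsum (\<lambda>u. k * (Phi a c u * w (basisv u) u)) UNIV"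
    unfolding Tr_m_eq by (simp add: algebra_simps)
  also have "\<dots> = k * Tr_m a c w" unfolding Tr_m_eq by (rule infsum_cmult_right')
  finally show ?thesis .
qed

lemma Tr_linear: fixes a :: "'n::finite \<Rightarrow> real" assumes "\<And>j. a j > 0" shows "weyl_linear (Tr_m a c)"
proof -
  have "Tr_m a c (\<lambda>f u. w f u + w' f u) = Tr_m a c w + Tr_m a c w'" if "w \<in> weyl" "w' \<in> weyl" for w w' :: "'n wop"
    by (rule Tr_add) (use assms that in auto)
  then show ?thesis unfolding weyl_linear_def using Tr_smult by blast
qed

lemma infsum_shift:
  fixes F G :: "('n::finite \<Rightarrow> nat) \<Rightarrow> complex"
  assumes z: "\<And>u. u i = 0 \<Longrightarrow> G u = 0" and s: "\<And>u. G (u(i := Suc (u i))) = F u"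
  shows "infsum F UNIV = infsum G UNIV"
proof -
  have "infsum G UNIV = infsum G {u. u i \<noteq> 0}"
    by (rule infsum_cong_neutral) (use z in auto)
  moreover have "infsum F UNIV = infsum G {u. u i \<noteq> 0}"
    by (rule infsum_reindex_bij_witness[where i = "\<lambda>v. v(i := v i - 1)" and j = "\<lambda>u. u(i := Suc (u i))"])
       (simp_all add: s)
  ultimately show ?thesis by simp
qed

lemma Xop_basisv: "Xop i (basisv u) = basisv (u(i := Suc (u i)))"
proof (intro ext)
  fix v
  show "Xop i (basisv u) v = basisv (u(i := Suc (u i))) v"
  proof (cases "v i = 0")
    case True
    then have "v \<noteq> u(i := Suc (u i))" by (metis fun_upd_same nat.distinct(1))
    then show ?thesis using True by (simp add: Xop_def basisv_def)
  next
    case False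
    have "(v(i := v i - 1) = u) = (v = u(i := Suc (u i)))"
    proof
      assume h: "v(i := v i - 1) = u" show "v = u(i := Suc (u i))" unfolding h[symmetric] using False by simp
    next
      assume h: "v = u(i := Suc (u i))" show "v(i := v i - 1) = u" unfolding h by simp
    qed
    then show ?thesis using False by (simp add: Xop_def basisv_def)
  qed
qed

lemma Yop_basisv: "Yop i (basisv u) = (\<lambda>v. - of_nat (u i) * basisv (u(i := u i - 1)) v)"
proof (intro ext)
  fix v
  show "Yop i (basisv u) v = - of_nat (u i) * basisv (u(i := u i - 1)) v"
  proof (cases "u i = 0")
    case True
    then have "v(i := v i + 1) \<noteq> u" by (metis add_eq_0_iff_both_eq_0 fun_upd_same zero_neq_one)
    then show ?thesis using True by (simp add: Yop_def basisv_def)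
  next
    case False
    have "(v(i := v i + 1) = u) = (v = u(i := u i - 1))"
    proof
      assume h: "v(i := v i + 1) = u" show "v = u(i := u i - 1)" unfolding h[symmetric] by simp
    next
      assume h: "v = u(i := u i - 1)" show "v(i := v i + 1) = u" unfolding h using False by simp
    qed
    then show ?thesis using False by (auto simp add: Yop_def basisv_def)
  qed
qed

lemma exp_cancel: "complex_of_real (exp (2 * pi * x)) * complex_of_real (exp (- 2 * pi * x)) = 1"
  by (simp flip: of_real_mult exp_add)

lemma trX:
  fixes a :: "'n::finite \<Rightarrow> real" and w1 :: "'n wop"
  shows "Tr_m a c (w1 \<circ> Xop i) = Tr_m a c (twist_aut a (Xop i) \<circ> w1)"
  unfolding Tr_m_eq
proof (simp only: comp_apply Xop_basisv tw_X, rule infsum_shift[where i = i])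
  fix u :: "'n \<Rightarrow> nat"
  show "u i = 0 \<Longrightarrow> Phi a c u * (- complex_of_real (exp (2 * pi * a i)) * Xop i (w1 (basisv u)) u) = 0"
    by (simp add: Xop_def)
  have "Phi a c (u(i := Suc (u i))) * (- complex_of_real (exp (2 * pi * a i)) * Xop i (w1 (basisv (u(i := Suc (u i))))) (u(i := Suc (u i))))
     = (complex_of_real (exp (2 * pi * a i)) * complex_of_real (exp (- 2 * pi * a i))) * Phi a c u * w1 (basisv (u(i := Suc (u i)))) u"
    by (simp add: Phi_upd Xop_def)
  then show "Phi a c (u(i := Suc (u i))) * (- complex_of_real (exp (2 * pi * a i)) * Xop i (w1 (basisv (u(i := Suc (u i))))) (u(i := Suc (u i))))
     = Phi a c u * w1 (basisv (u(i := Suc (u i)))) u"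
    by (simp only: exp_cancel mult_1)
qed

lemma trY:
  fixes a :: "'n::finite \<Rightarrow> real" and w1 :: "'n wop"
  assumes w1: "w1 \<in> weyl"
  shows "Tr_m a c (w1 \<circ> Yop i) = Tr_m a c (twist_aut a (Yop i) \<circ> w1)"
  unfolding Tr_m_eq
proof (simp only: comp_apply Yop_basisv tw_Y weyl_smult_op[OF w1], rule infsum_shift[where i = i, symmetric])
  fix u :: "'n \<Rightarrow> nat"
  show "u i = 0 \<Longrightarrow> Phi a c u * (- of_nat (u i) * w1 (basisv (u(i := u i - 1))) u) = 0"
    by simp
  show "Phi a c (u(i := Suc (u i))) * (- of_nat ((u(i := Suc (u i))) i) * w1 (basisv ((u(i := Suc (u i)))(i := (u(i := Suc (u i))) i - 1))) (u(i := Suc (u i))))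
     = Phi a c u * (- complex_of_real (exp (- 2 * pi * a i)) * Yop i (w1 (basisv u)) u)"
    by (simp add: Phi_upd Yop_def)
qed


lemma tr_twisted:
  fixes a :: "'n::finite \<Rightarrow> real" and w2 :: "'n wop"
  assumes apos: "\<And>j. a j > 0" and w2: "w2 \<in> weyl"
  shows "\<forall>w1\<in>weyl. Tr_m a c (w1 \<circ> w2) = Tr_m a c (twist_aut a w2 \<circ> w1)"
  using w2
proof (induction rule: weyl.induct)
  case one show ?case by (metis tw_id comp_id id_comp)
next
  case (genX i) show ?case using trX by blast
next
  case (genY i) show ?case using trY by blast
next
  case (add w w')
  show ?case
  proof
    fix w1 :: "'n wop" assume w1: "w1 \<in> weyl"
    have e1: "w1 \<circ> (\<lambda>f u. w f u + w' f u) = (\<lambda>f u. (w1 \<circ> w) f u + (w1 \<circ> w') f u)"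
      by (rule ext) (simp add: weyl_add_op[OF w1])
    have e2: "twist_aut a (\<lambda>f u. w f u + w' f u) \<circ> w1 = (\<lambda>f u. (twist_aut a w \<circ> w1) f u + (twist_aut a w' \<circ> w1) f u)"
      by (simp add: tw_add fun_eq_iff)
    have m: "w1 \<circ> w \<in> weyl" "w1 \<circ> w' \<in> weyl" "twist_aut a w \<circ> w1 \<in> weyl" "twist_aut a w' \<circ> w1 \<in> weyl"
      using add w1 by (auto intro: weyl.mult tw_weyl)
    show "Tr_m a c (w1 \<circ> (\<lambda>f u. w f u + w' f u)) = Tr_m a c (twist_aut a (\<lambda>f u. w f u + w' f u) \<circ> w1)"
      unfolding e1 e2 Tr_add[OF apos m(1,2)] Tr_add[OF apos m(3,4)] using add.IH w1 by metis
  qed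
next
  case (smult w k)
  show ?case
  proof
    fix w1 :: "'n wop" assume w1: "w1 \<in> weyl"
    have e1: "w1 \<circ> (\<lambda>f u. k * w f u) = (\<lambda>f u. k * (w1 \<circ> w) f u)"
      by (rule ext) (simp add: weyl_smult_op[OF w1])
    have e2: "twist_aut a (\<lambda>f u. k * w f u) \<circ> w1 = (\<lambda>f u. k * (twist_aut a w \<circ> w1) f u)"
      by (simp add: tw_smult fun_eq_iff)
    show "Tr_m a c (w1 \<circ> (\<lambda>f u. k * w f u)) = Tr_m a c (twist_aut a (\<lambda>f u. k * w f u) \<circ> w1)"
      unfolding e1 e2 Tr_smult using smult.IH w1 by metis
  qed
next
  case (mult w w')
  show ?case
  proof
    fix w1 :: "'n wop" assume w1: "w1 \<in> weyl"
    have m1: "w1 \<circ> w \<in> weyl" using mult w1 by (auto intro: weyl.mult)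
    have m2: "twist_aut a w' \<circ> w1 \<in> weyl" using mult w1 by (auto intro: weyl.mult tw_weyl)
    have "Tr_m a c (w1 \<circ> (w \<circ> w')) = Tr_m a c ((w1 \<circ> w) \<circ> w')" by (simp add: o_assoc)
    also have "\<dots> = Tr_m a c (twist_aut a w' \<circ> (w1 \<circ> w))" using mult.IH(2) m1 by blast
    also have "\<dots> = Tr_m a c ((twist_aut a w' \<circ> w1) \<circ> w)" by (simp add: o_assoc)
    also have "\<dots> = Tr_m a c (twist_aut a w \<circ> (twist_aut a w' \<circ> w1))" using mult.IH(1) m2 by blast
    also have "\<dots> = Tr_m a c (twist_aut a (w \<circ> w') \<circ> w1)" by (simp add: tw_comp o_assoc)
    finally show "Tr_m a c (w1 \<circ> (w \<circ> w')) = Tr_m a c (twist_aut a (w \<circ> w') \<circ> w1)" .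
  qed
qed

definition Xpow :: "('n::finite \<Rightarrow> nat) \<Rightarrow> 'n wop" where
  "Xpow \<alpha> f v = (if (\<forall>j. \<alpha> j \<le> v j) then f (\<lambda>j. v j - \<alpha> j) else 0)"

definition cY :: "('n::finite \<Rightarrow> nat) \<Rightarrow> ('n \<Rightarrow> nat) \<Rightarrow> complex" where
  "cY \<beta> v = (\<Prod>j\<in>UNIV. pochhammer (of_nat (v j) + 1) (\<beta> j))"

definition Ypow :: "('n::finite \<Rightarrow> nat) \<Rightarrow> 'n wop" where
  "Ypow \<beta> f v = (-1) ^ (sum \<beta> UNIV) * cY \<beta> v * f (\<lambda>j. v j + \<beta> j)"

definition Hop :: "'n::finite \<Rightarrow> 'n wop" where
  "Hop i f v = - of_nat (v i) * f v"

lemma Xpow_0: "Xpow (\<lambda>_. 0) = id"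
  by (simp add: Xpow_def fun_eq_iff)

lemma Ypow_0: "Ypow (\<lambda>_. 0) = id"
  by (simp add: Ypow_def cY_def fun_eq_iff)

lemma prod_split_cong:
  fixes F G :: "'n::finite \<Rightarrow> 'a::comm_monoid_mult"
  assumes "\<And>j. j \<noteq> i \<Longrightarrow> F j = G j"
  shows "(\<Prod>j\<in>UNIV. F j) = F i * (\<Prod>j\<in>UNIV-{i}. G j)"
proof -
  have "(\<Prod>j\<in>UNIV. F j) = F i * (\<Prod>j\<in>UNIV-{i}. F j)" by (rule prod.remove) auto
  also have "(\<Prod>j\<in>UNIV-{i}. F j) = (\<Prod>j\<in>UNIV-{i}. G j)" by (rule prod.cong) (use assms in auto)
  finally show ?thesis .
qed

lemma X_Xpow: "Xop i \<circ> Xpow \<alpha> = Xpow (\<alpha>(i := Suc (\<alpha> i)))"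
proof (intro ext)
  fix f v
  show "(Xop i \<circ> Xpow \<alpha>) f v = Xpow (\<alpha>(i := Suc (\<alpha> i))) f v"
  proof (cases "v i = 0")
    case True
    then have "\<not> (\<forall>j. (\<alpha>(i := Suc (\<alpha> i))) j \<le> v j)" by (metis fun_upd_same not_less_eq_eq zero_le)
    then have r: "Xpow (\<alpha>(i := Suc (\<alpha> i))) f v = 0" unfolding Xpow_def by (rule if_not_P)
    have l: "(Xop i \<circ> Xpow \<alpha>) f v = 0" using True by (simp add: Xop_def)
    show ?thesis using l r by simp
  next
    case False
    have c: "(\<forall>j. \<alpha> j \<le> (v(i := v i - 1)) j) = (\<forall>j. (\<alpha>(i := Suc (\<alpha> i))) j \<le> v j)"
      using False by (auto simp: le_diff_conv2)
    have e: "(\<lambda>j. (v(i := v i - 1)) j - \<alpha> j) = (\<lambda>j. v j - (\<alpha>(i := Suc (\<alpha> i))) j)"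
      by (auto simp: fun_eq_iff)
    show ?thesis using False by (simp only: comp_apply Xop_def Xpow_def c e if_False)
  qed
qed


lemma cY_upd_beta:
  "cY (\<beta>(i := Suc (\<beta> i))) v = pochhammer (of_nat (v i) + 1) (Suc (\<beta> i)) * (\<Prod>j\<in>UNIV-{i}. pochhammer (of_nat (v j) + 1) (\<beta> j))"
  unfolding cY_def by (subst prod_split_cong[where i = i]) auto

lemma cY_split:
  "cY \<beta> v = pochhammer (of_nat (v i) + 1) (\<beta> i) * (\<Prod>j\<in>UNIV-{i}. pochhammer (of_nat (v j) + 1) (\<beta> j))"
  unfolding cY_def by (rule prod_split_cong) auto

lemma cY_upd_v:
  "cY \<beta> (v(i := Suc (v i))) = pochhammer (of_nat (v i) + 2) (\<beta> i) * (\<Prod>j\<in>UNIV-{i}. pochhammer (of_nat (v j) + 1) (\<beta> j))"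
  unfolding cY_def by (subst prod_split_cong[where i = i]) (auto simp: add_ac)

lemma Y_Ypow: "Yop i \<circ> Ypow \<beta> = Ypow (\<beta>(i := Suc (\<beta> i)))"
proof (intro ext)
  fix f v
  have fe: "(\<lambda>j. (v(i := v i + 1)) j + \<beta> j) = (\<lambda>j. v j + (\<beta>(i := Suc (\<beta> i))) j)"
    by (simp add: fun_eq_iff)
  have s: "sum (\<beta>(i := Suc (\<beta> i))) UNIV = Suc (sum \<beta> UNIV)"
    using nsum_upd[of \<beta> i "Suc (\<beta> i)"] by simp
  have c: "cY (\<beta>(i := Suc (\<beta> i))) v = of_nat (v i + 1) * cY \<beta> (v(i := v i + 1))"
    using cY_upd_beta[of \<beta> i v] cY_upd_v[of \<beta> v i] by (simp add: pochhammer_rec add_ac)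
  show "(Yop i \<circ> Ypow \<beta>) f v = Ypow (\<beta>(i := Suc (\<beta> i))) f v"
    unfolding comp_apply Yop_def Ypow_def fe s c by (simp add: algebra_simps)
qed

lemma Ypow_Y: "Ypow \<beta> \<circ> Yop i = Ypow (\<beta>(i := Suc (\<beta> i)))"
proof (intro ext)
  fix f v
  have fe: "(\<lambda>j. v j + \<beta> j)(i := v i + \<beta> i + 1) = (\<lambda>j. v j + (\<beta>(i := Suc (\<beta> i))) j)"
    by (simp add: fun_eq_iff)
  have s: "sum (\<beta>(i := Suc (\<beta> i))) UNIV = Suc (sum \<beta> UNIV)"
    using nsum_upd[of \<beta> i "Suc (\<beta> i)"] by simp
  have c: "cY (\<beta>(i := Suc (\<beta> i))) v = of_nat (v i + \<beta> i + 1) * cY \<beta> v"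
    using cY_upd_beta[of \<beta> i v] cY_split[of \<beta> v i] by (simp add: pochhammer_rec' add_ac)
  show "(Ypow \<beta> \<circ> Yop i) f v = Ypow (\<beta>(i := Suc (\<beta> i))) f v"
    unfolding comp_apply Yop_def Ypow_def fe s c by (simp add: algebra_simps)
qed


lemma Y_Xpow: "Yop (i::'n::finite) \<circ> Xpow \<alpha> = (\<lambda>f v. Xpow \<alpha> (Yop i f) v - of_nat (\<alpha> i) * Xpow (\<alpha>(i := \<alpha> i - 1)) f v)"
proof (intro ext)
  fix f :: "'n fock" and v :: "'n \<Rightarrow> nat"
  define F where "F = f (\<lambda>j. (v(i := v i + 1)) j - \<alpha> j)"
  have C23: "(\<forall>j. \<alpha> j \<le> (v(i := v i + 1)) j) = (\<forall>j. (\<alpha>(i := \<alpha> i - 1)) j \<le> v j)" if "\<alpha> i > 0"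
    using that by (auto simp: le_diff_conv)
  have F3: "(\<lambda>j. v j - (\<alpha>(i := \<alpha> i - 1)) j) = (\<lambda>j. (v(i := v i + 1)) j - \<alpha> j)" if "\<alpha> i > 0"
    using that by (auto simp: fun_eq_iff)
  have F1: "(\<lambda>j. v j - \<alpha> j)(i := v i - \<alpha> i + 1) = (\<lambda>j. (v(i := v i + 1)) j - \<alpha> j)" if "\<alpha> i \<le> v i"
    using that by (auto simp: fun_eq_iff)
  have L: "(Yop i \<circ> Xpow \<alpha>) f v = - of_nat (v i + 1) * (if \<forall>j. \<alpha> j \<le> (v(i := v i + 1)) j then F else 0)"
    by (simp only: comp_apply Yop_def Xpow_def F_def)
  have X2: "of_nat (\<alpha> i) * Xpow (\<alpha>(i := \<alpha> i - 1)) f v = of_nat (\<alpha> i) * (if \<forall>j. \<alpha> j \<le> (v(i := v i + 1)) j then F else 0)"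
  proof (cases "\<alpha> i = 0")
    case True then show ?thesis by simp
  next
    case False
    then have p: "\<alpha> i > 0" by simp
    show ?thesis unfolding Xpow_def C23[OF p] F3[OF p] F_def by simp
  qed
  show "(Yop i \<circ> Xpow \<alpha>) f v = Xpow \<alpha> (Yop i f) v - of_nat (\<alpha> i) * Xpow (\<alpha>(i := \<alpha> i - 1)) f v"
  proof (cases "\<forall>j. \<alpha> j \<le> v j")
    case True
    then have C2: "\<forall>j. \<alpha> j \<le> (v(i := v i + 1)) j" using True by (auto intro: le_SucI)
    have ai: "\<alpha> i \<le> v i" using True by blast
    have X1: "Xpow \<alpha> (Yop i f) v = - of_nat (v i - \<alpha> i + 1) * F"
      unfolding Xpow_def Yop_def using True F1[OF ai] by (simp add: F_def)
    show ?thesis unfolding L X2 X1 using C2 ai by (simp add: of_nat_diff algebra_simps)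
  next
    case False
    have X1: "Xpow \<alpha> (Yop i f) v = 0" unfolding Xpow_def using False by (rule if_not_P)
    show ?thesis
    proof (cases "\<forall>j. \<alpha> j \<le> (v(i := v i + 1)) j")
      case True
      have "\<alpha> i = v i + 1"
      proof -
        have "\<alpha> j \<le> v j" if "j \<noteq> i" for j using True that by (metis fun_upd_other)
        then have "\<not> \<alpha> i \<le> v i" using False by metis
        moreover have "\<alpha> i \<le> v i + 1" using True by (metis fun_upd_same)
        ultimately show ?thesis by simp
      qed
      then show ?thesis unfolding L X2 X1 using True by (simp add: algebra_simps)
    next
      case False2: False
      show ?thesis unfolding L X2 X1 if_not_P[OF False2] by simp
    qed
  qed
qed

lemma H_eq: "Hop i = Xop i \<circ> Yop i"
  by (auto simp: fun_eq_iff Hop_def Xop_def Yop_def)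

lemma H_Xpow: "Hop i \<circ> Xpow \<alpha> = (\<lambda>f v. Xpow \<alpha> (Hop i f) v - of_nat (\<alpha> i) * Xpow \<alpha> f v)"
proof (intro ext)
  fix f v
  show "(Hop i \<circ> Xpow \<alpha>) f v = Xpow \<alpha> (Hop i f) v - of_nat (\<alpha> i) * Xpow \<alpha> f v"
  proof (cases "\<forall>j. \<alpha> j \<le> v j")
    case True
    then have "\<alpha> i \<le> v i" by blast
    then show ?thesis using True by (simp add: Hop_def Xpow_def of_nat_diff algebra_simps)
  next
    case False
    have z: "Xpow \<alpha> g v = 0" for g unfolding Xpow_def using False by (rule if_not_P)
    show ?thesis by (simp add: Hop_def z)
  qed
qed

lemma H_Ypow: "Hop i \<circ> Ypow \<beta> = (\<lambda>f v. Ypow \<beta> (Hop i f) v + of_nat (\<beta> i) * Ypow \<beta> f v)"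
  by (simp add: fun_eq_iff Hop_def Ypow_def algebra_simps)

lemma tw_H: "twist_aut a (Hop i) = Hop i"
  by (rule tw_diag[where \<phi> = "\<lambda>v. - of_nat (v i)"]) (simp add: Hop_def)

lemma exists_pos:
  fixes \<alpha> :: "'n::finite \<Rightarrow> nat"
  assumes "sum \<alpha> UNIV = Suc n"
  obtains i \<alpha>' where "\<alpha> = \<alpha>'(i := Suc (\<alpha>' i))" "sum \<alpha>' UNIV = n"
proof -
  have "\<exists>i. \<alpha> i \<noteq> 0"
  proof (rule ccontr)
    assume "\<not> (\<exists>i. \<alpha> i \<noteq> 0)"
    then have "sum \<alpha> UNIV = 0" by simp
    then show False using assms by simp
  qed
  then obtain i where i: "\<alpha> i \<noteq> 0" by blast
  define \<alpha>' where "\<alpha>' = \<alpha>(i := \<alpha> i - 1)"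
  have e: "\<alpha> = \<alpha>'(i := Suc (\<alpha>' i))" using i by (auto simp: \<alpha>'_def fun_eq_iff)
  have "sum \<alpha>' UNIV + \<alpha> i = sum \<alpha> UNIV + (\<alpha> i - 1)"
    unfolding \<alpha>'_def by (rule nsum_upd)
  then have "sum \<alpha>' UNIV = n" using assms i by simp
  then show ?thesis using that e by blast
qed

lemma Xpow_weyl: "Xpow (\<alpha>::'n::finite \<Rightarrow> nat) \<in> weyl"
proof -
  have "\<forall>\<alpha>::'n\<Rightarrow>nat. sum \<alpha> UNIV = n \<longrightarrow> Xpow \<alpha> \<in> weyl" for n
  proof (induction n)
    case 0
    then show ?case by (auto simp: Xpow_0[unfolded id_def] intro: weyl.one[unfolded id_def])
  next
    case (Suc n)
    show ?case
    proof (intro allI impI)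
      fix \<alpha> :: "'n \<Rightarrow> nat" assume "sum \<alpha> UNIV = Suc n"
      then obtain i \<alpha>' where e: "\<alpha> = \<alpha>'(i := Suc (\<alpha>' i))" and s: "sum \<alpha>' UNIV = n" by (rule exists_pos)
      have "Xpow \<alpha> = Xop i \<circ> Xpow \<alpha>'" using e X_Xpow by metis
      then show "Xpow \<alpha> \<in> weyl" using Suc s by (metis weyl.mult weyl.genX)
    qed
  qed
  then show ?thesis by blast
qed

lemma Ypow_weyl: "Ypow (\<beta>::'n::finite \<Rightarrow> nat) \<in> weyl"
proof -
  have "\<forall>\<beta>::'n\<Rightarrow>nat. sum \<beta> UNIV = n \<longrightarrow> Ypow \<beta> \<in> weyl" for n
  proof (induction n)
    case 0
    then show ?case by (auto simp: Ypow_0[unfolded id_def] intro: weyl.one[unfolded id_def])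
  next
    case (Suc n)
    show ?case
    proof (intro allI impI)
      fix \<beta> :: "'n \<Rightarrow> nat" assume "sum \<beta> UNIV = Suc n"
      then obtain i \<beta>' where e: "\<beta> = \<beta>'(i := Suc (\<beta>' i))" and s: "sum \<beta>' UNIV = n" by (rule exists_pos)
      have "Ypow \<beta> = Yop i \<circ> Ypow \<beta>'" using e Y_Ypow by metis
      then show "Ypow \<beta> \<in> weyl" using Suc s by (metis weyl.mult weyl.genY)
    qed
  qed
  then show ?thesis by blast
qed

lemma mono_weyl: "Xpow \<alpha> \<circ> Ypow (\<beta>::'n::finite \<Rightarrow> nat) \<in> weyl"
  by (rule weyl.mult[OF Xpow_weyl Ypow_weyl])

lemma Hop_weyl: "Hop (i::'n::finite) \<in> weyl"
  unfolding H_eq by (rule weyl.mult[OF weyl.genX weyl.genY])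

inductive_set lin :: "'n::finite wop set" where
  lmono: "Xpow \<alpha> \<circ> Ypow \<beta> \<in> lin"
| ladd: "s \<in> lin \<Longrightarrow> s' \<in> lin \<Longrightarrow> (\<lambda>f u. s f u + s' f u) \<in> lin"
| lsmult: "s \<in> lin \<Longrightarrow> (\<lambda>f u. k * s f u) \<in> lin"

lemma lin_weyl: "s \<in> lin \<Longrightarrow> s \<in> weyl"
proof (induction rule: lin.induct)
  case (lmono \<alpha> \<beta>) show ?case by (rule mono_weyl)
next
  case (ladd s s') then show ?case by (simp add: weyl.add)
next
  case (lsmult s k) then show ?case by (simp add: weyl.smult)
qed

lemma X_lin: "s \<in> lin \<Longrightarrow> Xop i \<circ> s \<in> lin"
proof (induction rule: lin.induct)
  case (lmono \<alpha> \<beta>)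
  have eq: "Xop i \<circ> (Xpow \<alpha> \<circ> Ypow \<beta>) = Xpow (\<alpha>(i := Suc (\<alpha> i))) \<circ> Ypow \<beta>"
    by (simp only: o_assoc X_Xpow)
  show ?case unfolding eq by (rule lin.lmono)
next
  case (ladd s s')
  have eq: "Xop i \<circ> (\<lambda>f u. s f u + s' f u) = (\<lambda>f u. (Xop i \<circ> s) f u + (Xop i \<circ> s') f u)"
    by (rule ext) (simp add: weyl_add_op[OF weyl.genX])
  show ?case unfolding eq by (rule lin.ladd[OF ladd.IH])
next
  case (lsmult s k)
  have eq: "Xop i \<circ> (\<lambda>f u. k * s f u) = (\<lambda>f u. k * (Xop i \<circ> s) f u)"
    by (rule ext) (simp add: weyl_smult_op[OF weyl.genX])
  show ?case unfolding eq by (rule lin.lsmult[OF lsmult.IH])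
qed

lemma Y_lin: "s \<in> lin \<Longrightarrow> Yop i \<circ> s \<in> lin"
proof (induction rule: lin.induct)
  case (lmono \<alpha> \<beta>)
  have eq: "Yop i \<circ> (Xpow \<alpha> \<circ> Ypow \<beta>) = (\<lambda>f v. (Xpow \<alpha> \<circ> Ypow (\<beta>(i := Suc (\<beta> i)))) f v + (- of_nat (\<alpha> i)) * (Xpow (\<alpha>(i := \<alpha> i - 1)) \<circ> Ypow \<beta>) f v)"
  proof (intro ext)
    fix f v
    have "(Yop i \<circ> (Xpow \<alpha> \<circ> Ypow \<beta>)) f v = ((Yop i \<circ> Xpow \<alpha>) \<circ> Ypow \<beta>) f v" by simp
    also have "\<dots> = Xpow \<alpha> (Yop i (Ypow \<beta> f)) v - of_nat (\<alpha> i) * Xpow (\<alpha>(i := \<alpha> i - 1)) (Ypow \<beta> f) v"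
      by (simp only: Y_Xpow comp_apply)
    also have "Yop i (Ypow \<beta> f) = Ypow (\<beta>(i := Suc (\<beta> i))) f"
      by (metis Y_Ypow comp_apply)
    finally show "(Yop i \<circ> (Xpow \<alpha> \<circ> Ypow \<beta>)) f v = (Xpow \<alpha> \<circ> Ypow (\<beta>(i := Suc (\<beta> i)))) f v + (- of_nat (\<alpha> i)) * (Xpow (\<alpha>(i := \<alpha> i - 1)) \<circ> Ypow \<beta>) f v"
      by (simp only: comp_apply diff_conv_add_uminus mult_minus_left)
  qed
  show ?case unfolding eq by (rule lin.ladd[OF lin.lmono lin.lsmult[OF lin.lmono]])
next
  case (ladd s s')
  have eq: "Yop i \<circ> (\<lambda>f u. s f u + s' f u) = (\<lambda>f u. (Yop i \<circ> s) f u + (Yop i \<circ> s') f u)"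
    by (rule ext) (simp add: weyl_add_op[OF weyl.genY])
  show ?case unfolding eq by (rule lin.ladd[OF ladd.IH])
next
  case (lsmult s k)
  have eq: "Yop i \<circ> (\<lambda>f u. k * s f u) = (\<lambda>f u. k * (Yop i \<circ> s) f u)"
    by (rule ext) (simp add: weyl_smult_op[OF weyl.genY])
  show ?case unfolding eq by (rule lin.lsmult[OF lsmult.IH])
qed

lemma weyl_comp_lin: "w \<in> weyl \<Longrightarrow> \<forall>s\<in>lin. w \<circ> s \<in> lin"
proof (induction rule: weyl.induct)
  case one then show ?case by simp
next
  case (genX i) then show ?case using X_lin by blast
next
  case (genY i) then show ?case using Y_lin by blast
next
  case (add w w')
  have eq: "(\<lambda>f u. w f u + w' f u) \<circ> s = (\<lambda>f u. (w \<circ> s) f u + (w' \<circ> s) f u)" for s :: "'a wop"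
    by (simp add: fun_eq_iff)
  show ?case unfolding eq using add.IH by (blast intro: lin.ladd)
next
  case (smult w k)
  have eq: "(\<lambda>f u. k * w f u) \<circ> s = (\<lambda>f u. k * (w \<circ> s) f u)" for s :: "'a wop"
    by (simp add: fun_eq_iff)
  show ?case unfolding eq using smult.IH by (blast intro: lin.lsmult)
next
  case (mult w w')
  show ?case unfolding o_assoc[symmetric] using mult.IH by blast
qed

lemma weyl_in_lin: "w \<in> weyl \<Longrightarrow> (w :: 'n::finite wop) \<in> lin"
proof -
  assume w: "w \<in> weyl"
  have "Xpow (\<lambda>_. 0) \<circ> Ypow (\<lambda>_. 0) \<in> (lin :: 'n wop set)" by (rule lin.lmono)
  then have "w \<circ> (Xpow (\<lambda>_. 0) \<circ> Ypow (\<lambda>_. 0)) \<in> lin" using weyl_comp_lin[OF w] by blast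
  then show ?thesis by (simp add: Xpow_0 Ypow_0)
qed

lemma vanish:
  fixes a :: "'n::finite \<Rightarrow> real" and T :: "'n wop \<Rightarrow> complex"
  assumes Tl: "weyl_linear T"
    and Tt: "\<forall>w1\<in>weyl. \<forall>w2\<in>weyl. T (w1 \<circ> w2) = T (twist_aut a w2 \<circ> w1)"
    and T0: "T id = 0"
  shows "\<forall>w\<in>weyl. T w = 0"
proof -
  have Tadd: "T (\<lambda>f u. w f u + w' f u) = T w + T w'" if "w \<in> weyl" "w' \<in> weyl" for w w'
    using Tl that unfolding weyl_linear_def by blast
  have Tsm: "T (\<lambda>f u. k * w f u) = k * T w" if "w \<in> weyl" for w k
    using Tl that unfolding weyl_linear_def by blast
  have Ttw: "T (w1 \<circ> w2) = T (twist_aut a w2 \<circ> w1)" if "w1 \<in> weyl" "w2 \<in> weyl" for w1 w2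
    using Tt that by blast

  have off: "T (Xpow \<alpha> \<circ> Ypow \<beta>) = 0" if ne: "\<alpha> \<noteq> \<beta>" for \<alpha> \<beta> :: "'n \<Rightarrow> nat"
  proof -
    obtain i where i: "\<alpha> i \<noteq> \<beta> i" using ne by (auto simp: fun_eq_iff)
    define M where "M = Xpow \<alpha> \<circ> Ypow \<beta>"
    have Mw: "M \<in> weyl" unfolding M_def by (rule mono_weyl)
    have HM: "Hop i \<circ> M = (\<lambda>f v. (M \<circ> Hop i) f v + (of_nat (\<beta> i) - of_nat (\<alpha> i)) * M f v)"
    proof (intro ext)
      fix f v
      have e1: "Hop i (Ypow \<beta> f) = (\<lambda>v. Ypow \<beta> (Hop i f) v + of_nat (\<beta> i) * Ypow \<beta> f v)"
        by (simp add: Hop_def Ypow_def fun_eq_iff algebra_simps)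
      have "(Hop i \<circ> M) f v = ((Hop i \<circ> Xpow \<alpha>) \<circ> Ypow \<beta>) f v" by (simp add: M_def)
      also have "\<dots> = Xpow \<alpha> (Hop i (Ypow \<beta> f)) v - of_nat (\<alpha> i) * Xpow \<alpha> (Ypow \<beta> f) v"
        by (simp only: H_Xpow comp_apply)
      also have "Xpow \<alpha> (Hop i (Ypow \<beta> f)) v = Xpow \<alpha> (Ypow \<beta> (Hop i f)) v + of_nat (\<beta> i) * Xpow \<alpha> (Ypow \<beta> f) v"
        unfolding e1 by (simp add: Xpow_def)
      finally show "(Hop i \<circ> M) f v = (M \<circ> Hop i) f v + (of_nat (\<beta> i) - of_nat (\<alpha> i)) * M f v"
        by (simp add: M_def algebra_simps)
    qed
    have m1: "M \<circ> Hop i \<in> weyl" using Mw Hop_weyl by (rule weyl.mult)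
    have m2: "(\<lambda>f v. (of_nat (\<beta> i) - of_nat (\<alpha> i)) * M f v) \<in> weyl" using Mw by (rule weyl.smult)
    have "T (M \<circ> Hop i) = T (twist_aut a (Hop i) \<circ> M)" by (rule Ttw[OF Mw Hop_weyl])
    also have "twist_aut a (Hop i) = Hop i" by (rule tw_H)
    also have "T (Hop i \<circ> M) = T (M \<circ> Hop i) + (of_nat (\<beta> i) - of_nat (\<alpha> i)) * T M"
      unfolding HM using Tadd[OF m1 m2] Tsm[OF Mw] by simp
    finally have eq: "T (M \<circ> Hop i) = T (M \<circ> Hop i) + (of_nat (\<beta> i) - of_nat (\<alpha> i)) * T M" .
    have "(of_nat (\<beta> i) - of_nat (\<alpha> i)) * T M = 0" using eq by (metis add_cancel_left_right)
    moreover have "(of_nat (\<beta> i) - of_nat (\<alpha> i) :: complex) \<noteq> 0" using i by simp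
    ultimately show ?thesis unfolding M_def by simp
  qed

  have diag: "T (Xpow \<alpha> \<circ> Ypow \<alpha>) = 0" for \<alpha> :: "'n \<Rightarrow> nat"
  proof -
    have "\<forall>\<alpha>::'n\<Rightarrow>nat. sum \<alpha> UNIV = n \<longrightarrow> T (Xpow \<alpha> \<circ> Ypow \<alpha>) = 0" for n
    proof (induction n)
      case 0
      show ?case
      proof (intro allI impI)
        fix \<alpha> :: "'n \<Rightarrow> nat" assume "sum \<alpha> UNIV = 0"
        then have z: "\<alpha> = (\<lambda>_. 0)" by (simp add: fun_eq_iff)
        show "T (Xpow \<alpha> \<circ> Ypow \<alpha>) = 0" unfolding z Xpow_0 Ypow_0 comp_id by (rule T0)
      qed
    next
      case (Suc n)
      show ?case
      proof (intro allI impI)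
        fix \<alpha> :: "'n \<Rightarrow> nat" assume "sum \<alpha> UNIV = Suc n"
        then obtain i \<alpha>' where e: "\<alpha> = \<alpha>'(i := Suc (\<alpha>' i))" and s: "sum \<alpha>' UNIV = n" by (rule exists_pos)
        define dY where "dY = - complex_of_real (exp (- 2 * pi * a i))"
        define Mp where "Mp = Xpow \<alpha>' \<circ> Ypow \<alpha>'"
        define Zm where "Zm = Xop i \<circ> Mp"
        define M where "M = Xpow \<alpha> \<circ> Ypow \<alpha>"
        have Mpw: "Mp \<in> weyl" unfolding Mp_def by (rule mono_weyl)
        have Mw: "M \<in> weyl" unfolding M_def by (rule mono_weyl)
        have Zw: "Zm \<in> weyl" unfolding Zm_def using weyl.genX Mpw by (rule weyl.mult)
        have YZw: "Yop i \<circ> Zm \<in> weyl" using weyl.genY Zw by (rule weyl.mult)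
        have xa: "Xop i \<circ> Xpow \<alpha>' = Xpow \<alpha>" unfolding e by (rule X_Xpow)
        have ya: "Ypow \<alpha>' \<circ> Yop i = Ypow \<alpha>" unfolding e by (rule Ypow_Y)
        have ya2: "Yop i \<circ> Ypow \<alpha>' = Ypow \<alpha>" unfolding e by (rule Y_Ypow)
        have am: "\<alpha>(i := \<alpha> i - 1) = \<alpha>'" unfolding e by simp
        have MZ: "M = Zm \<circ> Yop i"
          unfolding M_def Zm_def Mp_def xa[symmetric] ya[symmetric] by (simp only: o_assoc)
        have YZ: "Yop i \<circ> Zm = (\<lambda>f v. M f v + (- of_nat (\<alpha> i)) * Mp f v)"
        proof (intro ext)
          fix f v
          have "(Yop i \<circ> Zm) f v = ((Yop i \<circ> Xpow \<alpha>) \<circ> Ypow \<alpha>') f v"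
            unfolding Zm_def Mp_def xa[symmetric] by simp
          also have "\<dots> = Xpow \<alpha> (Yop i (Ypow \<alpha>' f)) v - of_nat (\<alpha> i) * Xpow (\<alpha>(i := \<alpha> i - 1)) (Ypow \<alpha>' f) v"
            by (simp only: Y_Xpow comp_apply)
          also have "Yop i (Ypow \<alpha>' f) = Ypow \<alpha> f" by (simp flip: ya2)
          finally show "(Yop i \<circ> Zm) f v = M f v + (- of_nat (\<alpha> i)) * Mp f v"
            unfolding am M_def Mp_def by simp
        qed
        have m3: "(\<lambda>f v. (- of_nat (\<alpha> i)) * Mp f v) \<in> weyl" using Mpw by (rule weyl.smult)
        have "T M = T (Zm \<circ> Yop i)" by (simp add: MZ)
        also have "\<dots> = T (twist_aut a (Yop i) \<circ> Zm)" by (rule Ttw[OF Zw weyl.genY])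
        also have "twist_aut a (Yop i) \<circ> Zm = (\<lambda>f v. dY * (Yop i \<circ> Zm) f v)"
          by (simp add: tw_Y dY_def fun_eq_iff)
        also have "T (\<lambda>f v. dY * (Yop i \<circ> Zm) f v) = dY * T (Yop i \<circ> Zm)" by (rule Tsm[OF YZw])
        also have "T (Yop i \<circ> Zm) = T M + (- of_nat (\<alpha> i)) * T Mp"
          unfolding YZ by (simp only: Tadd[OF Mw m3] Tsm[OF Mpw])
        also have "T Mp = 0" using Suc.IH s unfolding Mp_def by blast
        finally have "T M = dY * T M" by simp
        then have "(1 - dY) * T M = 0" by (simp add: algebra_simps)
        moreover have "1 - dY \<noteq> 0"
        proof -
          have "Re (1 - dY) = 1 + exp (- 2 * pi * a i)" by (simp add: dY_def)
          then have "Re (1 - dY) > 0" by (smt (verit) exp_gt_zero)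
          then show ?thesis by auto
        qed
        ultimately show "T (Xpow \<alpha> \<circ> Ypow \<alpha>) = 0" unfolding M_def by simp
      qed
    qed
    then show ?thesis by blast
  qed

  have allm: "T (Xpow \<alpha> \<circ> Ypow \<beta>) = 0" for \<alpha> \<beta> :: "'n \<Rightarrow> nat"
    using off diag by (cases "\<alpha> = \<beta>") auto
  have "s \<in> lin \<Longrightarrow> T s = 0" for s :: "'n wop"
  proof (induction rule: lin.induct)
    case (lmono \<alpha> \<beta>) then show ?case by (rule allm)
  next
    case (ladd s s') then show ?case using Tadd[OF lin_weyl[OF ladd.hyps(1)] lin_weyl[OF ladd.hyps(2)]] by simp
  next
    case (lsmult s k) then show ?case using Tsm[OF lin_weyl[OF lsmult.hyps(1)]] by simp
  qed
  then show ?thesis using weyl_in_lin by blast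
qed

lemma Phi_prod:
  fixes a :: "'n::finite \<Rightarrow> real"
  shows "Phi a c u = exp (2 * complex_of_real pi * (c - (\<Sum>j\<in>UNIV. complex_of_real (a j)) / 2)) *
     (\<Prod>j\<in>UNIV. (- complex_of_real (exp (- 2 * pi * a j))) ^ u j)"
proof -
  define A where "A = 2 * complex_of_real pi * (c - (\<Sum>j\<in>UNIV. complex_of_real (a j)) / 2)"
  have t: "complex_of_real (a j) * (- of_nat (u j + 1) + 1/2) = - complex_of_real (a j) / 2 + of_nat (u j) * (- complex_of_real (a j))" for j
    by (simp add: algebra_simps)
  have s1: "muhat a c (basisv u) u = (\<Sum>j\<in>UNIV. - complex_of_real (a j) / 2) + (\<Sum>j\<in>UNIV. of_nat (u j) * (- complex_of_real (a j))) + c"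
    by (simp only: muhat_val t sum.distrib)
  have s2: "(\<Sum>j\<in>UNIV. - complex_of_real (a j) / 2) = - (\<Sum>j\<in>UNIV. complex_of_real (a j)) / 2"
    by (simp add: sum_negf sum_divide_distrib)
  have s3: "(\<Sum>j\<in>UNIV. of_nat (u j) * complex_of_real (- 2 * pi * a j)) = 2 * complex_of_real pi * (\<Sum>j\<in>UNIV. of_nat (u j) * (- complex_of_real (a j)))"
    by (simp add: sum_distrib_left algebra_simps)
  have m: "2 * complex_of_real pi * muhat a c (basisv u) u = A + (\<Sum>j\<in>UNIV. of_nat (u j) * complex_of_real (- 2 * pi * a j))"
    unfolding s1 s2 s3 A_def by (simp add: algebra_simps)
  have e: "exp (of_nat (u j) * complex_of_real (- 2 * pi * a j)) = complex_of_real (exp (- 2 * pi * a j)) ^ u j" for j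
    by (simp only: exp_of_nat_mult exp_of_real)
  have "Phi a c u = (\<Prod>j\<in>UNIV. (-1) ^ u j) * (exp A * (\<Prod>j\<in>UNIV. complex_of_real (exp (- 2 * pi * a j)) ^ u j))"
    unfolding Phi_def m by (simp only: power_sum exp_add exp_sum[of UNIV] finite_class.finite_UNIV e simp_thms)
  also have "\<dots> = exp A * (\<Prod>j\<in>UNIV. (-1) ^ u j * complex_of_real (exp (- 2 * pi * a j)) ^ u j)"
    by (simp add: prod.distrib)
  also have "\<dots> = exp A * (\<Prod>j\<in>UNIV. (- complex_of_real (exp (- 2 * pi * a j))) ^ u j)"
    by (simp add: power_mult_distrib[symmetric])
  finally show ?thesis unfolding A_def .
qed

lemma geom_has_sum:
  fixes x :: real assumes "0 < x" "x < 1"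
  shows "((\<lambda>k. (- complex_of_real x) ^ k) has_sum (1 / (1 + complex_of_real x))) UNIV"
proof -
  have n: "norm (- complex_of_real x) < 1" using assms by simp
  have "summable (\<lambda>k. norm ((- complex_of_real x) ^ k))"
    using summable_geometric[of "norm (- complex_of_real x)"] n by (simp add: norm_power)
  moreover have "(\<lambda>k. (- complex_of_real x) ^ k) sums (1 / (1 - (- complex_of_real x)))"
    by (rule geometric_sums[OF n])
  ultimately show ?thesis using norm_summable_imp_has_sum by fastforce
qed

lemma Tr_id_nonzero:
  fixes a :: "'n::finite \<Rightarrow> real"
  assumes apos: "\<And>j. a j > 0"
  shows "Tr_m a c id \<noteq> 0"
proof -
  define K0 where "K0 = exp (2 * complex_of_real pi * (c - (\<Sum>j\<in>UNIV. complex_of_real (a j)) / 2))"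
  define f where "f j k = (- complex_of_real (exp (- 2 * pi * a j))) ^ k" for j k
  have q: "0 < exp (- 2 * pi * a j)" "exp (- 2 * pi * a j) < 1" for j
    using apos[of j] by auto
  have hs: "(f j has_sum (1 / (1 + complex_of_real (exp (- 2 * pi * a j))))) UNIV" for j
    unfolding f_def using geom_has_sum[OF q(1) q(2)] by blast
  have abs: "(\<lambda>k. norm (f j k)) summable_on UNIV" for j
  proof -
    have "summable (\<lambda>k. norm (norm (f j k)))"
      using summable_geometric[of "exp (- 2 * pi * a j)"] q[of j] by (simp add: f_def norm_power)
    then show ?thesis by (rule norm_summable_imp_summable_on)
  qed
  have "Tr_m a c id = infsum (\<lambda>u. K0 * (\<Prod>j\<in>UNIV. f j (u j))) UNIV"
    unfolding Tr_m_eq by (simp add: basisv_def Phi_prod K0_def f_def)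
  also have "\<dots> = K0 * infsum (\<lambda>u. \<Prod>j\<in>UNIV. f j (u j)) UNIV" by (rule infsum_cmult_right')
  also have "infsum (\<lambda>u. \<Prod>j\<in>UNIV. f j (u j)) UNIV = (\<Prod>j\<in>UNIV. infsum (f j) UNIV)"
    using infsum_prod_PiE_abs[of UNIV f "\<lambda>_. UNIV"] abs by simp
  also have "\<dots> = (\<Prod>j\<in>UNIV. 1 / (1 + complex_of_real (exp (- 2 * pi * a j))))"
    by (rule prod.cong[OF refl]) (rule infsumI[OF hs])
  finally have eq: "Tr_m a c id = K0 * (\<Prod>j\<in>UNIV. 1 / (1 + complex_of_real (exp (- 2 * pi * a j))))" .
  have nz: "1 + complex_of_real (exp (- 2 * pi * a j)) \<noteq> 0" for j
  proof -
    have r: "Re (1 + complex_of_real (exp (- 2 * pi * a j))) > 0" by (simp add: add_pos_pos)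
    show ?thesis
    proof
      assume "1 + complex_of_real (exp (- 2 * pi * a j)) = 0"
      then have "Re (1 + complex_of_real (exp (- 2 * pi * a j))) = 0" by (simp only: zero_complex.sel)
      then show False using r by simp
    qed
  qed
  show ?thesis unfolding eq K0_def using nz by simp
qed

theorem mainTheorem2:
  fixes a :: "'n::finite \<Rightarrow> real" and c :: complex
  assumes "\<forall>i. a i > 0"
  shows "(\<forall>w\<in>weyl. trV_converges (parityV \<circ> diag_exp2pi (muhat a c) \<circ> w))
       \<and> twisted_trace (twist_aut a) (Tr_m a c)
       \<and> (\<forall>T. twisted_trace (twist_aut a) T \<longrightarrow> (\<exists>k. \<forall>w\<in>weyl. T w = k * Tr_m a c w))"
proof -
  have apos: "\<And>j. a j > 0" using assms by blast
  have P1: "\<forall>w\<in>weyl. trV_converges (parityV \<circ> diag_exp2pi (muhat a c) \<circ> w)"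
    unfolding conv_eq using trace_summable[where a = a, OF apos] by blast
  have P2: "twisted_trace (twist_aut a) (Tr_m a c)"
    unfolding twisted_trace_def using Tr_linear[where a = a, OF apos] tr_twisted[where a = a, OF apos] by blast
  have P3: "\<exists>k. \<forall>w\<in>weyl. T w = k * Tr_m a c w" if T: "twisted_trace (twist_aut a) T" for T
  proof -
    define k where "k = T id / Tr_m a c id"
    define T' where "T' w = T w - k * Tr_m a c w" for w
    have TL: "weyl_linear T" and TT: "\<forall>w1\<in>weyl. \<forall>w2\<in>weyl. T (w1 \<circ> w2) = T (twist_aut a w2 \<circ> w1)"
      using T unfolding twisted_trace_def by blast+
    have RL: "weyl_linear (Tr_m a c)" and RT: "\<forall>w1\<in>weyl. \<forall>w2\<in>weyl. Tr_m a c (w1 \<circ> w2) = Tr_m a c (twist_aut a w2 \<circ> w1)"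
      using P2 unfolding twisted_trace_def by blast+
    have L': "weyl_linear T'"
      using TL RL unfolding weyl_linear_def T'_def by (simp add: algebra_simps)
    have T'': "\<forall>w1\<in>weyl. \<forall>w2\<in>weyl. T' (w1 \<circ> w2) = T' (twist_aut a w2 \<circ> w1)"
      using TT RT unfolding T'_def by simp
    have z: "T' id = 0" unfolding T'_def k_def using Tr_id_nonzero[where a = a, OF apos, of c] by simp
    have "\<forall>w\<in>weyl. T' w = 0" by (rule vanish[OF L' T'' z])
    then show ?thesis unfolding T'_def by auto
  qed
  show ?thesis using P1 P2 P3 by blast
qed

end
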